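(* Let $\mu,\nu\in\mathbb{R}$ and $\tau\in\mathbb{R}\setminus\{0\}$. On smooth functions $\Phi(x,t)$ on $\mathbb{R}^2$ define the operators $$H=\partial_t,\quad P=\partial_x,\quad K=-\nu t\,e^{-\tau\partial_t}\partial_x-\mu x\,\frac{e^{\tau\partial_t}-1}{\tau},\quad D=-x\partial_x-t\,\frac{1-e^{-\tau\partial_t}}{\tau},$$ $$C_1=(\mu x^2+\nu t^2e^{-\tau\partial_t})\frac{e^{\tau\partial_t}-1}{\tau}+2\nu xt\,\partial_x+\tau\nu(x\partial_x+x^2\partial_x^2),$$ $$C_2=-(\mu x^2+\nu t^2e^{-2\tau\partial_t})\partial_x-2\mu xt\,\frac{1-e^{-\tau\partial_t}}{\tau}+\tau\nu t\,e^{-2\tau\partial_t}\partial_x,$$ where $e^{a\partial_t}$ is the shift $\Phi(x,t)\mapsto\Phi(x,t+a)$ and $x,t$ denote multiplication operators. Then these operators satisfy the relations $[K,H]=\nu e^{-\tau H}P$, $[K,P]=\mu\frac{e^{\tau H}-1}{\tau}$, $[H,P]=0$, $[K,D]=0$, $[D,H]=\frac{1-e^{-\tau H}}{\tau}$, $[D,C_1]=-C_1+\tau\nu D^2$, $[H,C_1]=-2\nu D$, $[D,P]=P$, $[D,C_2]=-C_2$, $[P,C_2]=2\mu D$, $[K,C_1]=\nu C_2$, $[K,C_2]=\mu C_1-\tau\mu\nu D^2$, $[H,C_2]=e^{-\tau H}K+Ke^{-\tau H}$, $[P,C_1]=-2K-\tau\nu(DP+PD)$, $[C_1,C_2]=-\tau\nu(DC_2+C_2D)$.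 Moreover, with $$E_\tau=\nu\,\partial_x^2-\mu\Big(\frac{e^{\tau\partial_t}-1}{\tau}\Big)^2,$$ one has $[E_\tau,X]=0$ for $X\in\{K,H,P\}$, $[E_\tau,D]=-2E_\tau$, $[E_\tau,C_1]=4\nu(t+\tau+\tau x\partial_x)E_\tau$ and $[E_\tau,C_2]=-4\mu x\,E_\tau$. In particular each of $H,P,K,D,C_1,C_2$ maps solutions of $E_\tau\Phi=0$ to solutions of $E_\tau\Phi=0$. *)

theory Defs
  imports "HOL-Analysis.Analysis"
begin

type_synonym fn2 = "real \<Rightarrow> real \<Rightarrow> real"
type_synonym op2 = "fn2 \<Rightarrow> fn2"

definition Dx :: op2 where "Dx \<Phi> = (\<lambda>x t. deriv (\<lambda>y. \<Phi> y t) x)"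
definition Dt :: op2 where "Dt \<Phi> = (\<lambda>x t. deriv (\<lambda>s. \<Phi> x s) t)"

definition Sh :: "real \<Rightarrow> op2" where "Sh a \<Phi> = (\<lambda>x t. \<Phi> x (t + a))"

definition Mx :: op2 where "Mx \<Phi> = (\<lambda>x t. x * \<Phi> x t)"
definition Mt :: op2 where "Mt \<Phi> = (\<lambda>x t. t * \<Phi> x t)"
definition Sc :: "real \<Rightarrow> op2" where "Sc c \<Phi> = (\<lambda>x t. c * \<Phi> x t)"

definition opadd :: "op2 \<Rightarrow> op2 \<Rightarrow> op2" (infixl "\<oplus>" 65)
  where "A \<oplus> B = (\<lambda>\<Phi> x t. A \<Phi> x t + B \<Phi> x t)"
definition opsub :: "op2 \<Rightarrow> op2 \<Rightarrow> op2" (infixl "\<ominus>" 65)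
  where "A \<ominus> B = (\<lambda>\<Phi> x t. A \<Phi> x t - B \<Phi> x t)"
definition opzero :: op2 where "opzero = (\<lambda>\<Phi> x t. 0)"

definition comm :: "op2 \<Rightarrow> op2 \<Rightarrow> op2" where "comm A B = (A \<circ> B) \<ominus> (B \<circ> A)"

definition iter_partial :: "bool list \<Rightarrow> op2" where
  "iter_partial ds = foldr (\<lambda>b A. (if b then Dx else Dt) \<circ> A) ds id"

definition smooth2 :: "fn2 \<Rightarrow> bool" where
  "smooth2 \<Phi> \<longleftrightarrow> (\<forall>ds. continuous_on UNIV (\<lambda>(x,t). iter_partial ds \<Phi> x t) \<and>
      (\<forall>x t. (\<lambda>y. iter_partial ds \<Phi> y t) differentiable (at x) \<and>
             (\<lambda>s. iter_partial ds \<Phi> x s) differentiable (at t)))"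

definition opH :: op2 where "opH = Dt"
definition opP :: op2 where "opP = Dx"

definition fwd :: "real \<Rightarrow> op2" where "fwd \<tau> = Sc (1/\<tau>) \<circ> (Sh \<tau> \<ominus> id)"
definition bwd :: "real \<Rightarrow> op2" where "bwd \<tau> = Sc (1/\<tau>) \<circ> (id \<ominus> Sh (-\<tau>))"

definition opK :: "real \<Rightarrow> real \<Rightarrow> real \<Rightarrow> op2" where
  "opK \<mu> \<nu> \<tau> = (Sc (-\<nu>) \<circ> Mt \<circ> Sh (-\<tau>) \<circ> Dx) \<ominus> (Sc \<mu> \<circ> Mx \<circ> fwd \<tau>)"

definition opD :: "real \<Rightarrow> op2" where
  "opD \<tau> = (Sc (-1) \<circ> Mx \<circ> Dx) \<ominus> (Mt \<circ> bwd \<tau>)"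

definition opC1 :: "real \<Rightarrow> real \<Rightarrow> real \<Rightarrow> op2" where
  "opC1 \<mu> \<nu> \<tau> =
     (((Sc \<mu> \<circ> Mx \<circ> Mx) \<oplus> (Sc \<nu> \<circ> Mt \<circ> Mt \<circ> Sh (-\<tau>))) \<circ> fwd \<tau>)
     \<oplus> (Sc (2 * \<nu>) \<circ> Mx \<circ> Mt \<circ> Dx)
     \<oplus> (Sc (\<tau> * \<nu>) \<circ> ((Mx \<circ> Dx) \<oplus> (Mx \<circ> Mx \<circ> Dx \<circ> Dx)))"

definition opC2 :: "real \<Rightarrow> real \<Rightarrow> real \<Rightarrow> op2" where
  "opC2 \<mu> \<nu> \<tau> =
     (Sc (-1) \<circ> ((Sc \<mu> \<circ> Mx \<circ> Mx) \<oplus> (Sc \<nu> \<circ> Mt \<circ> Mt \<circ> Sh (-2 * \<tau>))) \<circ> Dx)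
     \<ominus> (Sc (2 * \<mu>) \<circ> Mx \<circ> Mt \<circ> bwd \<tau>)
     \<oplus> (Sc (\<tau> * \<nu>) \<circ> Mt \<circ> Sh (-2 * \<tau>) \<circ> Dx)"

definition opE :: "real \<Rightarrow> real \<Rightarrow> real \<Rightarrow> op2" where
  "opE \<mu> \<nu> \<tau> = (Sc \<nu> \<circ> Dx \<circ> Dx) \<ominus> (Sc \<mu> \<circ> fwd \<tau> \<circ> fwd \<tau>)"

end

theory Submission
  imports Defs
begin

lemma schwarz_pt:
  fixes g :: fn2
  assumes dx: "\<And>x t. (\<lambda>y. g y t) differentiable (at x)"
    and dt: "\<And>x t. (\<lambda>s. g x s) differentiable (at t)"
    and dxt: "\<And>x t. (\<lambda>s. Dx g x s) differentiable (at t)"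
    and dtx: "\<And>x t. (\<lambda>y. Dt g y t) differentiable (at x)"
    and cA: "continuous_on UNIV (\<lambda>(x,t). Dt (Dx g) x t)"
    and cB: "continuous_on UNIV (\<lambda>(x,t). Dx (Dt g) x t)"
  shows "Dt (Dx g) x t = Dx (Dt g) x t"
proof (rule ccontr)
  let ?A = "\<lambda>(x,t). Dt (Dx g) x t" and ?B = "\<lambda>(x,t). Dx (Dt g) x t"
  define a where "a = Dt (Dx g) x t"
  define b where "b = Dx (Dt g) x t"
  assume "Dt (Dx g) x t \<noteq> Dx (Dt g) x t"
  then have ab: "a \<noteq> b" unfolding a_def b_def by simp
  define e where "e = \<bar>a - b\<bar> / 2"
  have e: "e > 0" using ab unfolding e_def by simp
  have "isCont ?A (x,t)" using cA by (simp add: continuous_on_eq_continuous_at)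
  then obtain d1 where d1: "d1 > 0" "\<And>p. dist p (x,t) < d1 \<Longrightarrow> dist (?A p) (?A (x,t)) < e"
    using e unfolding continuous_at_eps_delta by metis
  have "isCont ?B (x,t)" using cB by (simp add: continuous_on_eq_continuous_at)
  then obtain d2 where d2: "d2 > 0" "\<And>p. dist p (x,t) < d2 \<Longrightarrow> dist (?B p) (?B (x,t)) < e"
    using e unfolding continuous_at_eps_delta by metis
  define h where "h = min d1 d2 / 4"
  have h: "h > 0" "2 * h < d1" "2 * h < d2" using d1 d2 unfolding h_def by auto
  have D: "\<And>(f::real\<Rightarrow>real) z. f differentiable (at z) \<Longrightarrow> DERIV f z :> deriv f z"
    using DERIV_deriv_iff_real_differentiable by blast
  define Del where "Del = g (x+h) (t+h) - g (x+h) t - g x (t+h) + g x t"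
  have close: "dist (p, q) (x, t) < 2 * h" if "x < p" "p < x + h" "t < q" "q < t + h" for p q
  proof -
    have "dist (p, q) (x, t) \<le> dist p x + dist q t"
      by (simp add: dist_Pair_Pair dist_real_def sqrt_sum_squares_le_sum_abs)
    also have "\<dots> < 2 * h" using that by (simp add: dist_real_def)
    finally show ?thesis .
  qed
  obtain \<xi> where \<xi>: "x < \<xi>" "\<xi> < x + h"
    "(g (x+h) (t+h) - g (x+h) t) - (g x (t+h) - g x t) = h * (Dx g \<xi> (t+h) - Dx g \<xi> t)"
  proof -
    have "\<exists>z. x < z \<and> z < x + h \<and> (g (x+h) (t+h) - g (x+h) t) - (g x (t+h) - g x t) = ((x+h) - x) * (Dx g z (t+h) - Dx g z t)"
      by (rule MVT2[of x "x+h" "\<lambda>y. g y (t+h) - g y t" "\<lambda>y. Dx g y (t+h) - Dx g y t"])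
        (use h(1) in \<open>auto simp: Dx_def intro!: derivative_intros D dx\<close>)
    then show ?thesis using that by auto
  qed
  obtain \<eta> where \<eta>: "t < \<eta>" "\<eta> < t + h"
    "Dx g \<xi> (t+h) - Dx g \<xi> t = h * Dt (Dx g) \<xi> \<eta>"
  proof -
    have "\<exists>z. t < z \<and> z < t + h \<and> Dx g \<xi> (t+h) - Dx g \<xi> t = ((t+h) - t) * Dt (Dx g) \<xi> z"
      by (rule MVT2[of t "t+h" "\<lambda>s. Dx g \<xi> s" "\<lambda>s. Dt (Dx g) \<xi> s"])
        (use h(1) in \<open>auto simp: Dt_def intro!: D dxt\<close>)
    then show ?thesis using that by auto
  qed
  obtain \<eta>' where \<eta>': "t < \<eta>'" "\<eta>' < t + h"
    "(g (x+h) (t+h) - g x (t+h)) - (g (x+h) t - g x t) = h * (Dt g (x+h) \<eta>' - Dt g x \<eta>')"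
  proof -
    have "\<exists>z. t < z \<and> z < t + h \<and> (g (x+h) (t+h) - g x (t+h)) - (g (x+h) t - g x t) = ((t+h) - t) * (Dt g (x+h) z - Dt g x z)"
      by (rule MVT2[of t "t+h" "\<lambda>s. g (x+h) s - g x s" "\<lambda>s. Dt g (x+h) s - Dt g x s"])
        (use h(1) in \<open>auto simp: Dt_def intro!: derivative_intros D dt\<close>)
    then show ?thesis using that by auto
  qed
  obtain \<xi>' where \<xi>': "x < \<xi>'" "\<xi>' < x + h"
    "Dt g (x+h) \<eta>' - Dt g x \<eta>' = h * Dx (Dt g) \<xi>' \<eta>'"
  proof -
    have "\<exists>z. x < z \<and> z < x + h \<and> Dt g (x+h) \<eta>' - Dt g x \<eta>' = ((x+h) - x) * Dx (Dt g) z \<eta>'"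
      by (rule MVT2[of x "x+h" "\<lambda>y. Dt g y \<eta>'" "\<lambda>y. Dx (Dt g) y \<eta>'"])
        (use h(1) in \<open>auto simp: Dx_def intro!: D dtx\<close>)
    then show ?thesis using that by auto
  qed
  have "h * h * Dt (Dx g) \<xi> \<eta> = h * h * Dx (Dt g) \<xi>' \<eta>'"
    using \<xi>(3) \<eta>(3) \<eta>'(3) \<xi>'(3) by (simp add: algebra_simps)
  then have eq: "Dt (Dx g) \<xi> \<eta> = Dx (Dt g) \<xi>' \<eta>'" using h(1) by simp
  have "dist (?A (\<xi>,\<eta>)) a < e" using d1(2)[of "(\<xi>,\<eta>)"] close[OF \<xi>(1,2) \<eta>(1,2)] h
    unfolding a_def by simp
  moreover have "dist (?B (\<xi>',\<eta>')) b < e" using d2(2)[of "(\<xi>',\<eta>')"] close[OF \<xi>'(1,2) \<eta>'(1,2)] h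
    unfolding b_def by simp
  ultimately show False using eq unfolding e_def dist_real_def by (simp add: abs_if split: if_splits) linarith?
qed

lemma ip_Cons: "iter_partial (b#ds) f = (if b then Dx else Dt) (iter_partial ds f)"
  by (simp add: iter_partial_def)
lemma ip_Nil: "iter_partial [] f = f"
  by (simp add: iter_partial_def)

lemma diff_fd: "(f::real\<Rightarrow>real) differentiable (at x) \<Longrightarrow> f field_differentiable (at x)"
  using DERIV_deriv_iff_real_differentiable field_differentiable_def by blast

lemma deriv_add_f: "(\<And>z. f field_differentiable at z) \<Longrightarrow> (\<And>z. g field_differentiable at z) \<Longrightarrow>
  deriv (\<lambda>w. f w + g w) = (\<lambda>z. deriv f z + deriv g z)"
  by (simp add: fun_eq_iff)
lemma deriv_diff_f: "(\<And>z. f field_differentiable at z) \<Longrightarrow> (\<And>z. g field_differentiable at z) \<Longrightarrow>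
  deriv (\<lambda>w. f w - g w) = (\<lambda>z. deriv f z - deriv g z)"
  by (simp add: fun_eq_iff)
lemma deriv_mult_f: "(\<And>z. f field_differentiable at z) \<Longrightarrow> (\<And>z. g field_differentiable at z) \<Longrightarrow>
  deriv (\<lambda>w. f w * g w) = (\<lambda>z. f z * deriv g z + deriv f z * g z)"
  by (simp add: fun_eq_iff)
lemma deriv_minus_f: "(\<And>z. f field_differentiable at z) \<Longrightarrow>
  deriv (\<lambda>w. - f w) = (\<lambda>z. - deriv f z)"
  by (simp add: fun_eq_iff)

context
  fixes \<Phi> :: fn2
  assumes sm: "smooth2 \<Phi>"
begin

lemma F1: "(\<lambda>y. iter_partial ds \<Phi> y t) field_differentiable (at x)"
  using sm by (auto simp: smooth2_def intro: diff_fd)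
lemma F2': "(\<lambda>s. iter_partial ds \<Phi> x s) field_differentiable (at t)"
  using sm by (auto simp: smooth2_def intro: diff_fd)
lemma F2: "g field_differentiable (at t) \<Longrightarrow> (\<lambda>s. iter_partial ds \<Phi> x (g s)) field_differentiable (at t)"
  using field_differentiable_compose[of g t "\<lambda>s. iter_partial ds \<Phi> x s"] F2'
  by (simp add: o_def)
lemma R1: "deriv (\<lambda>y. iter_partial ds \<Phi> y t) x = iter_partial (True#ds) \<Phi> x t"
  by (simp add: ip_Cons Dx_def)
lemma R2: "g field_differentiable (at t) \<Longrightarrow>
   deriv (\<lambda>s. iter_partial ds \<Phi> x (g s)) t = iter_partial (False#ds) \<Phi> x (g t) * deriv g t"
  using deriv_chain[of g t "\<lambda>s. iter_partial ds \<Phi> x s"] F2'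
  by (simp add: o_def ip_Cons Dt_def)
lemma R1f: "deriv (\<lambda>y. iter_partial ds \<Phi> y t) = (\<lambda>x. iter_partial (True#ds) \<Phi> x t)"
  by (simp add: ip_Cons Dx_def)
lemma R1pf: "deriv (\<lambda>y. \<Phi> y t) = (\<lambda>x. iter_partial [True] \<Phi> x t)"
  using R1f[of "[]"] by (simp add: ip_Nil)
lemma R2f: "deriv (iter_partial ds \<Phi> x) = iter_partial (False#ds) \<Phi> x"
  by (simp add: ip_Cons Dt_def fun_eq_iff)
lemma R2pf: "deriv (\<Phi> x) = iter_partial [False] \<Phi> x"
  using R2f[of "[]"] by (simp add: ip_Nil)
lemma R2e: "deriv (iter_partial ds \<Phi> x) t = iter_partial (False#ds) \<Phi> x t"
  by (simp add: ip_Cons Dt_def)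
lemma F2e: "(iter_partial ds \<Phi> x) field_differentiable (at t)"
  using F2' by simp

lemma F1p: "(\<lambda>y. \<Phi> y t) field_differentiable (at x)"
  using F1[of "[]"] by (simp add: ip_Nil)
lemma F2p: "g field_differentiable (at t) \<Longrightarrow> (\<lambda>s. \<Phi> x (g s)) field_differentiable (at t)"
  using F2[of g t "[]"] by (simp add: ip_Nil)
lemma F2pe: "(\<Phi> x) field_differentiable (at t)"
  using F2e[of "[]"] by (simp add: ip_Nil)
lemma R1p: "deriv (\<lambda>y. \<Phi> y t) x = iter_partial [True] \<Phi> x t"
  using R1[of "[]"] by (simp add: ip_Nil)
lemma R2p: "g field_differentiable (at t) \<Longrightarrow>
   deriv (\<lambda>s. \<Phi> x (g s)) t = iter_partial [False] \<Phi> x (g t) * deriv g t"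
  using R2[of g t "[]"] by (simp add: ip_Nil)
lemma R2pe: "deriv (\<Phi> x) t = iter_partial [False] \<Phi> x t"
  using R2e[of "[]"] by (simp add: ip_Nil)

lemma SW: "iter_partial (False#True#ds) \<Phi> = iter_partial (True#False#ds) \<Phi>"
proof -
  let ?g = "iter_partial ds \<Phi>"
  have c: "continuous_on UNIV (\<lambda>(x,t). iter_partial ds' \<Phi> x t)" for ds'
    using sm by (simp add: smooth2_def)
  have "Dt (Dx ?g) x t = Dx (Dt ?g) x t" for x t
  proof (rule schwarz_pt)
    have d: "(\<lambda>y. iter_partial ds' \<Phi> y t) differentiable (at x)"
      "(\<lambda>s. iter_partial ds' \<Phi> x s) differentiable (at t)" for ds' x t
      using sm by (auto simp: smooth2_def)
    have e: "Dx ?g = iter_partial (True#ds) \<Phi>" "Dt ?g = iter_partial (False#ds) \<Phi>"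
      "Dt (Dx ?g) = iter_partial (False#True#ds) \<Phi>" "Dx (Dt ?g) = iter_partial (True#False#ds) \<Phi>"
      by (simp_all add: ip_Cons)
    show "(\<lambda>y. ?g y t) differentiable (at x)" "(\<lambda>s. ?g x s) differentiable (at t)"
      "(\<lambda>s. Dx ?g x s) differentiable (at t)" "(\<lambda>y. Dt ?g y t) differentiable (at x)"
      for x t unfolding e(1,2) by (rule d)+
    show "continuous_on UNIV (\<lambda>(x,t). Dt (Dx ?g) x t)" "continuous_on UNIV (\<lambda>(x,t). Dx (Dt ?g) x t)"
      unfolding e(3,4) by (rule c)+
  qed
  then show ?thesis by (auto simp: ip_Cons fun_eq_iff)
qed

lemma SW2: "iter_partial (b#False#True#ds) \<Phi> = iter_partial (b#True#False#ds) \<Phi>"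
  by (simp only: ip_Cons[of b] SW)
lemma SW3: "iter_partial (b#b'#False#True#ds) \<Phi> = iter_partial (b#b'#True#False#ds) \<Phi>"
  by (simp only: ip_Cons[of b] SW2)
lemma SW4: "iter_partial (b#b'#b''#False#True#ds) \<Phi> = iter_partial (b#b'#b''#True#False#ds) \<Phi>"
  by (simp only: ip_Cons[of b] SW3)

lemma R2F: "(\<And>t. g field_differentiable (at t)) \<Longrightarrow>
   deriv (\<lambda>s. iter_partial ds \<Phi> x (g s)) = (\<lambda>t. iter_partial (False#ds) \<Phi> x (g t) * deriv g t)"
  by (simp add: fun_eq_iff R2)
lemma R2pF: "(\<And>t. g field_differentiable (at t)) \<Longrightarrow>
   deriv (\<lambda>s. \<Phi> x (g s)) = (\<lambda>t. iter_partial [False] \<Phi> x (g t) * deriv g t)"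
  by (simp add: fun_eq_iff R2p)

lemmas calc = R2F R2pF deriv_add_f deriv_diff_f deriv_mult_f deriv_minus_f SW2 SW3 SW4 F1 F2 F2e F1p F2p F2pe R1 R2 R2e R1p R2p R2pe SW R1f R1pf R2f R2pf
  field_differentiable_add field_differentiable_diff field_differentiable_mult
  field_differentiable_minus field_differentiable_divide

end

lemma Dx_app: "Dx F x t = deriv (\<lambda>y. F y t) x" by (simp add: Dx_def)
lemma Dt_app: "Dt F x t = deriv (\<lambda>s. F x s) t" by (simp add: Dt_def)

lemmas opdefs = comm_def opH_def opP_def opK_def opD_def opC1_def opC2_def opE_def
  opadd_def opsub_def opzero_def Sh_def Mx_def Mt_def Sc_def Dx_def Dt_def o_def

lemma rel_KH:
  fixes \<mu> \<nu> \<tau> :: real and \<Phi> :: fn2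
  assumes "\<tau> \<noteq> 0" and sm: "smooth2 \<Phi>"
  shows "comm (opK \<mu> \<nu> \<tau>) opH \<Phi> = (Sc \<nu> \<circ> Sh (-\<tau>) \<circ> opP) \<Phi>"
proof -
  define c where "c = 1 / \<tau>"
  have tc: "\<tau> * c = 1" using assms(1) by (simp add: c_def)
  have tcX: "\<tau> * (c * X) = X" for X using tc by (simp add: mult.assoc[symmetric])
  have fb: "fwd \<tau> = Sc c \<circ> (Sh \<tau> \<ominus> id)" "bwd \<tau> = Sc c \<circ> (id \<ominus> Sh (-\<tau>))"
    by (simp_all add: fwd_def bwd_def c_def)
  show ?thesis
    by (simp add: fb opdefs calc[OF sm] fun_eq_iff; simp add: algebra_simps tc tcX)
qed

lemma rel_KP:
  fixes \<mu> \<nu> \<tau> :: real and \<Phi> :: fn2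
  assumes "\<tau> \<noteq> 0" and sm: "smooth2 \<Phi>"
  shows "comm (opK \<mu> \<nu> \<tau>) opP \<Phi> = (Sc \<mu> \<circ> fwd \<tau>) \<Phi>"
proof -
  define c where "c = 1 / \<tau>"
  have tc: "\<tau> * c = 1" using assms(1) by (simp add: c_def)
  have tcX: "\<tau> * (c * X) = X" for X using tc by (simp add: mult.assoc[symmetric])
  have fb: "fwd \<tau> = Sc c \<circ> (Sh \<tau> \<ominus> id)" "bwd \<tau> = Sc c \<circ> (id \<ominus> Sh (-\<tau>))"
    by (simp_all add: fwd_def bwd_def c_def)
  show ?thesis
    by (simp add: fb opdefs calc[OF sm] fun_eq_iff; simp add: algebra_simps tc tcX)
qed

lemma rel_HP:
  fixes \<mu> \<nu> \<tau> :: real and \<Phi> :: fn2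
  assumes "\<tau> \<noteq> 0" and sm: "smooth2 \<Phi>"
  shows "comm opH opP \<Phi> = opzero \<Phi>"
proof -
  define c where "c = 1 / \<tau>"
  have tc: "\<tau> * c = 1" using assms(1) by (simp add: c_def)
  have tcX: "\<tau> * (c * X) = X" for X using tc by (simp add: mult.assoc[symmetric])
  have fb: "fwd \<tau> = Sc c \<circ> (Sh \<tau> \<ominus> id)" "bwd \<tau> = Sc c \<circ> (id \<ominus> Sh (-\<tau>))"
    by (simp_all add: fwd_def bwd_def c_def)
  show ?thesis
    by (simp add: fb opdefs calc[OF sm] fun_eq_iff; simp add: algebra_simps tc tcX)
qed

lemma rel_KD:
  fixes \<mu> \<nu> \<tau> :: real and \<Phi> :: fn2
  assumes "\<tau> \<noteq> 0" and sm: "smooth2 \<Phi>"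
  shows "comm (opK \<mu> \<nu> \<tau>) (opD \<tau>) \<Phi> = opzero \<Phi>"
proof -
  define c where "c = 1 / \<tau>"
  have tc: "\<tau> * c = 1" using assms(1) by (simp add: c_def)
  have tcX: "\<tau> * (c * X) = X" for X using tc by (simp add: mult.assoc[symmetric])
  have fb: "fwd \<tau> = Sc c \<circ> (Sh \<tau> \<ominus> id)" "bwd \<tau> = Sc c \<circ> (id \<ominus> Sh (-\<tau>))"
    by (simp_all add: fwd_def bwd_def c_def)
  show ?thesis
    by (simp add: fb opdefs calc[OF sm] fun_eq_iff; simp add: algebra_simps tc tcX)
qed

lemma rel_DH:
  fixes \<mu> \<nu> \<tau> :: real and \<Phi> :: fn2
  assumes "\<tau> \<noteq> 0" and sm: "smooth2 \<Phi>"
  shows "comm (opD \<tau>) opH \<Phi> = bwd \<tau> \<Phi>"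
proof -
  define c where "c = 1 / \<tau>"
  have tc: "\<tau> * c = 1" using assms(1) by (simp add: c_def)
  have tcX: "\<tau> * (c * X) = X" for X using tc by (simp add: mult.assoc[symmetric])
  have fb: "fwd \<tau> = Sc c \<circ> (Sh \<tau> \<ominus> id)" "bwd \<tau> = Sc c \<circ> (id \<ominus> Sh (-\<tau>))"
    by (simp_all add: fwd_def bwd_def c_def)
  show ?thesis
    by (simp add: fb opdefs calc[OF sm] fun_eq_iff; simp add: algebra_simps tc tcX)
qed

lemma rel_DC1:
  fixes \<mu> \<nu> \<tau> :: real and \<Phi> :: fn2
  assumes "\<tau> \<noteq> 0" and sm: "smooth2 \<Phi>"
  shows "comm (opD \<tau>) (opC1 \<mu> \<nu> \<tau>) \<Phi> = ((Sc (-1) \<circ> (opC1 \<mu> \<nu> \<tau>)) \<oplus> (Sc (\<tau> * \<nu>) \<circ> (opD \<tau>) \<circ> (opD \<tau>))) \<Phi>"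
proof -
  define c where "c = 1 / \<tau>"
  have tc: "\<tau> * c = 1" using assms(1) by (simp add: c_def)
  have tcX: "\<tau> * (c * X) = X" for X using tc by (simp add: mult.assoc[symmetric])
  have fb: "fwd \<tau> = Sc c \<circ> (Sh \<tau> \<ominus> id)" "bwd \<tau> = Sc c \<circ> (id \<ominus> Sh (-\<tau>))"
    by (simp_all add: fwd_def bwd_def c_def)
  show ?thesis
    by (simp add: fb opdefs calc[OF sm] fun_eq_iff; simp add: algebra_simps tc tcX)
qed

lemma rel_HC1:
  fixes \<mu> \<nu> \<tau> :: real and \<Phi> :: fn2
  assumes "\<tau> \<noteq> 0" and sm: "smooth2 \<Phi>"
  shows "comm opH (opC1 \<mu> \<nu> \<tau>) \<Phi> = (Sc (-2 * \<nu>) \<circ> (opD \<tau>)) \<Phi>"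
proof -
  define c where "c = 1 / \<tau>"
  have tc: "\<tau> * c = 1" using assms(1) by (simp add: c_def)
  have tcX: "\<tau> * (c * X) = X" for X using tc by (simp add: mult.assoc[symmetric])
  have fb: "fwd \<tau> = Sc c \<circ> (Sh \<tau> \<ominus> id)" "bwd \<tau> = Sc c \<circ> (id \<ominus> Sh (-\<tau>))"
    by (simp_all add: fwd_def bwd_def c_def)
  show ?thesis
    by (simp add: fb opdefs calc[OF sm] fun_eq_iff; simp add: algebra_simps tc tcX)
qed

lemma rel_DP:
  fixes \<mu> \<nu> \<tau> :: real and \<Phi> :: fn2
  assumes "\<tau> \<noteq> 0" and sm: "smooth2 \<Phi>"
  shows "comm (opD \<tau>) opP \<Phi> = opP \<Phi>"
proof -
  define c where "c = 1 / \<tau>"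
  have tc: "\<tau> * c = 1" using assms(1) by (simp add: c_def)
  have tcX: "\<tau> * (c * X) = X" for X using tc by (simp add: mult.assoc[symmetric])
  have fb: "fwd \<tau> = Sc c \<circ> (Sh \<tau> \<ominus> id)" "bwd \<tau> = Sc c \<circ> (id \<ominus> Sh (-\<tau>))"
    by (simp_all add: fwd_def bwd_def c_def)
  show ?thesis
    by (simp add: fb opdefs calc[OF sm] fun_eq_iff; simp add: algebra_simps tc tcX)
qed

lemma rel_DC2:
  fixes \<mu> \<nu> \<tau> :: real and \<Phi> :: fn2
  assumes "\<tau> \<noteq> 0" and sm: "smooth2 \<Phi>"
  shows "comm (opD \<tau>) (opC2 \<mu> \<nu> \<tau>) \<Phi> = (Sc (-1) \<circ> (opC2 \<mu> \<nu> \<tau>)) \<Phi>"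
proof -
  define c where "c = 1 / \<tau>"
  have tc: "\<tau> * c = 1" using assms(1) by (simp add: c_def)
  have tcX: "\<tau> * (c * X) = X" for X using tc by (simp add: mult.assoc[symmetric])
  have fb: "fwd \<tau> = Sc c \<circ> (Sh \<tau> \<ominus> id)" "bwd \<tau> = Sc c \<circ> (id \<ominus> Sh (-\<tau>))"
    by (simp_all add: fwd_def bwd_def c_def)
  show ?thesis
    by (simp add: fb opdefs calc[OF sm] fun_eq_iff; simp add: algebra_simps tc tcX)
qed

lemma rel_PC2:
  fixes \<mu> \<nu> \<tau> :: real and \<Phi> :: fn2
  assumes "\<tau> \<noteq> 0" and sm: "smooth2 \<Phi>"
  shows "comm opP (opC2 \<mu> \<nu> \<tau>) \<Phi> = (Sc (2 * \<mu>) \<circ> (opD \<tau>)) \<Phi>"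
proof -
  define c where "c = 1 / \<tau>"
  have tc: "\<tau> * c = 1" using assms(1) by (simp add: c_def)
  have tcX: "\<tau> * (c * X) = X" for X using tc by (simp add: mult.assoc[symmetric])
  have fb: "fwd \<tau> = Sc c \<circ> (Sh \<tau> \<ominus> id)" "bwd \<tau> = Sc c \<circ> (id \<ominus> Sh (-\<tau>))"
    by (simp_all add: fwd_def bwd_def c_def)
  show ?thesis
    by (simp add: fb opdefs calc[OF sm] fun_eq_iff; simp add: algebra_simps tc tcX)
qed

lemma rel_KC1:
  fixes \<mu> \<nu> \<tau> :: real and \<Phi> :: fn2
  assumes "\<tau> \<noteq> 0" and sm: "smooth2 \<Phi>"
  shows "comm (opK \<mu> \<nu> \<tau>) (opC1 \<mu> \<nu> \<tau>) \<Phi> = (Sc \<nu> \<circ> (opC2 \<mu> \<nu> \<tau>)) \<Phi>"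
proof -
  define c where "c = 1 / \<tau>"
  have tc: "\<tau> * c = 1" using assms(1) by (simp add: c_def)
  have tcX: "\<tau> * (c * X) = X" for X using tc by (simp add: mult.assoc[symmetric])
  have fb: "fwd \<tau> = Sc c \<circ> (Sh \<tau> \<ominus> id)" "bwd \<tau> = Sc c \<circ> (id \<ominus> Sh (-\<tau>))"
    by (simp_all add: fwd_def bwd_def c_def)
  show ?thesis
    by (simp add: fb opdefs calc[OF sm] fun_eq_iff; simp add: algebra_simps tc tcX)
qed

lemma rel_KC2:
  fixes \<mu> \<nu> \<tau> :: real and \<Phi> :: fn2
  assumes "\<tau> \<noteq> 0" and sm: "smooth2 \<Phi>"
  shows "comm (opK \<mu> \<nu> \<tau>) (opC2 \<mu> \<nu> \<tau>) \<Phi> = ((Sc \<mu> \<circ> (opC1 \<mu> \<nu> \<tau>)) \<ominus> (Sc (\<tau> * \<mu> * \<nu>) \<circ> (opD \<tau>) \<circ> (opD \<tau>))) \<Phi>"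
proof -
  define c where "c = 1 / \<tau>"
  have tc: "\<tau> * c = 1" using assms(1) by (simp add: c_def)
  have tcX: "\<tau> * (c * X) = X" for X using tc by (simp add: mult.assoc[symmetric])
  have fb: "fwd \<tau> = Sc c \<circ> (Sh \<tau> \<ominus> id)" "bwd \<tau> = Sc c \<circ> (id \<ominus> Sh (-\<tau>))"
    by (simp_all add: fwd_def bwd_def c_def)
  show ?thesis
    by (simp add: fb opdefs calc[OF sm] fun_eq_iff; simp add: algebra_simps tc tcX)
qed

lemma rel_HC2:
  fixes \<mu> \<nu> \<tau> :: real and \<Phi> :: fn2
  assumes "\<tau> \<noteq> 0" and sm: "smooth2 \<Phi>"
  shows "comm opH (opC2 \<mu> \<nu> \<tau>) \<Phi> = ((Sh (-\<tau>) \<circ> (opK \<mu> \<nu> \<tau>)) \<oplus> ((opK \<mu> \<nu> \<tau>) \<circ> Sh (-\<tau>))) \<Phi>"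
proof -
  define c where "c = 1 / \<tau>"
  have tc: "\<tau> * c = 1" using assms(1) by (simp add: c_def)
  have tcX: "\<tau> * (c * X) = X" for X using tc by (simp add: mult.assoc[symmetric])
  have fb: "fwd \<tau> = Sc c \<circ> (Sh \<tau> \<ominus> id)" "bwd \<tau> = Sc c \<circ> (id \<ominus> Sh (-\<tau>))"
    by (simp_all add: fwd_def bwd_def c_def)
  show ?thesis
    by (simp add: fb opdefs calc[OF sm] fun_eq_iff; simp add: algebra_simps tc tcX)
qed

lemma rel_PC1:
  fixes \<mu> \<nu> \<tau> :: real and \<Phi> :: fn2
  assumes "\<tau> \<noteq> 0" and sm: "smooth2 \<Phi>"
  shows "comm opP (opC1 \<mu> \<nu> \<tau>) \<Phi> = ((Sc (-2) \<circ> (opK \<mu> \<nu> \<tau>)) \<ominus> (Sc (\<tau> * \<nu>) \<circ> (((opD \<tau>) \<circ> opP) \<oplus> (opP \<circ> (opD \<tau>))))) \<Phi>"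
proof -
  define c where "c = 1 / \<tau>"
  have tc: "\<tau> * c = 1" using assms(1) by (simp add: c_def)
  have tcX: "\<tau> * (c * X) = X" for X using tc by (simp add: mult.assoc[symmetric])
  have fb: "fwd \<tau> = Sc c \<circ> (Sh \<tau> \<ominus> id)" "bwd \<tau> = Sc c \<circ> (id \<ominus> Sh (-\<tau>))"
    by (simp_all add: fwd_def bwd_def c_def)
  show ?thesis
    by (simp add: fb opdefs calc[OF sm] fun_eq_iff; simp add: algebra_simps tc tcX)
qed

lemma rel_C1C2:
  fixes \<mu> \<nu> \<tau> :: real and \<Phi> :: fn2
  assumes "\<tau> \<noteq> 0" and sm: "smooth2 \<Phi>"
  shows "comm (opC1 \<mu> \<nu> \<tau>) (opC2 \<mu> \<nu> \<tau>) \<Phi> = (Sc (-\<tau> * \<nu>) \<circ> (((opD \<tau>) \<circ> (opC2 \<mu> \<nu> \<tau>)) \<oplus> ((opC2 \<mu> \<nu> \<tau>) \<circ> (opD \<tau>)))) \<Phi>"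
proof -
  define c where "c = 1 / \<tau>"
  have tc: "\<tau> * c = 1" using assms(1) by (simp add: c_def)
  have tcX: "\<tau> * (c * X) = X" for X using tc by (simp add: mult.assoc[symmetric])
  have fb: "fwd \<tau> = Sc c \<circ> (Sh \<tau> \<ominus> id)" "bwd \<tau> = Sc c \<circ> (id \<ominus> Sh (-\<tau>))"
    by (simp_all add: fwd_def bwd_def c_def)
  show ?thesis
    by (simp add: fb opdefs calc[OF sm] fun_eq_iff; simp add: algebra_simps tc tcX)
qed

lemma rel_EK:
  fixes \<mu> \<nu> \<tau> :: real and \<Phi> :: fn2
  assumes "\<tau> \<noteq> 0" and sm: "smooth2 \<Phi>"
  shows "comm (opE \<mu> \<nu> \<tau>) (opK \<mu> \<nu> \<tau>) \<Phi> = opzero \<Phi>"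
proof -
  define c where "c = 1 / \<tau>"
  have tc: "\<tau> * c = 1" using assms(1) by (simp add: c_def)
  have tcX: "\<tau> * (c * X) = X" for X using tc by (simp add: mult.assoc[symmetric])
  have fb: "fwd \<tau> = Sc c \<circ> (Sh \<tau> \<ominus> id)" "bwd \<tau> = Sc c \<circ> (id \<ominus> Sh (-\<tau>))"
    by (simp_all add: fwd_def bwd_def c_def)
  show ?thesis
    by (simp add: fb opdefs calc[OF sm] fun_eq_iff; simp add: algebra_simps tc tcX)
qed

lemma rel_EH:
  fixes \<mu> \<nu> \<tau> :: real and \<Phi> :: fn2
  assumes "\<tau> \<noteq> 0" and sm: "smooth2 \<Phi>"
  shows "comm (opE \<mu> \<nu> \<tau>) opH \<Phi> = opzero \<Phi>"
proof -
  define c where "c = 1 / \<tau>"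
  have tc: "\<tau> * c = 1" using assms(1) by (simp add: c_def)
  have tcX: "\<tau> * (c * X) = X" for X using tc by (simp add: mult.assoc[symmetric])
  have fb: "fwd \<tau> = Sc c \<circ> (Sh \<tau> \<ominus> id)" "bwd \<tau> = Sc c \<circ> (id \<ominus> Sh (-\<tau>))"
    by (simp_all add: fwd_def bwd_def c_def)
  show ?thesis
    by (simp add: fb opdefs calc[OF sm] fun_eq_iff; simp add: algebra_simps tc tcX)
qed

lemma rel_EP:
  fixes \<mu> \<nu> \<tau> :: real and \<Phi> :: fn2
  assumes "\<tau> \<noteq> 0" and sm: "smooth2 \<Phi>"
  shows "comm (opE \<mu> \<nu> \<tau>) opP \<Phi> = opzero \<Phi>"
proof -
  define c where "c = 1 / \<tau>"
  have tc: "\<tau> * c = 1" using assms(1) by (simp add: c_def)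
  have tcX: "\<tau> * (c * X) = X" for X using tc by (simp add: mult.assoc[symmetric])
  have fb: "fwd \<tau> = Sc c \<circ> (Sh \<tau> \<ominus> id)" "bwd \<tau> = Sc c \<circ> (id \<ominus> Sh (-\<tau>))"
    by (simp_all add: fwd_def bwd_def c_def)
  show ?thesis
    by (simp add: fb opdefs calc[OF sm] fun_eq_iff; simp add: algebra_simps tc tcX)
qed

lemma rel_ED:
  fixes \<mu> \<nu> \<tau> :: real and \<Phi> :: fn2
  assumes "\<tau> \<noteq> 0" and sm: "smooth2 \<Phi>"
  shows "comm (opE \<mu> \<nu> \<tau>) (opD \<tau>) \<Phi> = (Sc (-2) \<circ> (opE \<mu> \<nu> \<tau>)) \<Phi>"
proof -
  define c where "c = 1 / \<tau>"
  have tc: "\<tau> * c = 1" using assms(1) by (simp add: c_def)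
  have tcX: "\<tau> * (c * X) = X" for X using tc by (simp add: mult.assoc[symmetric])
  have fb: "fwd \<tau> = Sc c \<circ> (Sh \<tau> \<ominus> id)" "bwd \<tau> = Sc c \<circ> (id \<ominus> Sh (-\<tau>))"
    by (simp_all add: fwd_def bwd_def c_def)
  show ?thesis
    by (simp add: fb opdefs calc[OF sm] fun_eq_iff; simp add: algebra_simps tc tcX)
qed

lemma rel_EC1:
  fixes \<mu> \<nu> \<tau> :: real and \<Phi> :: fn2
  assumes "\<tau> \<noteq> 0" and sm: "smooth2 \<Phi>"
  shows "comm (opE \<mu> \<nu> \<tau>) (opC1 \<mu> \<nu> \<tau>) \<Phi> = (Sc (4 * \<nu>) \<circ> (Mt \<oplus> Sc \<tau> \<oplus> (Sc \<tau> \<circ> Mx \<circ> Dx)) \<circ> (opE \<mu> \<nu> \<tau>)) \<Phi>"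
proof -
  define c where "c = 1 / \<tau>"
  have tc: "\<tau> * c = 1" using assms(1) by (simp add: c_def)
  have tcX: "\<tau> * (c * X) = X" for X using tc by (simp add: mult.assoc[symmetric])
  have fb: "fwd \<tau> = Sc c \<circ> (Sh \<tau> \<ominus> id)" "bwd \<tau> = Sc c \<circ> (id \<ominus> Sh (-\<tau>))"
    by (simp_all add: fwd_def bwd_def c_def)
  show ?thesis
    by (simp add: fb opdefs calc[OF sm] fun_eq_iff; simp add: algebra_simps tc tcX)
qed

lemma rel_EC2:
  fixes \<mu> \<nu> \<tau> :: real and \<Phi> :: fn2
  assumes "\<tau> \<noteq> 0" and sm: "smooth2 \<Phi>"
  shows "comm (opE \<mu> \<nu> \<tau>) (opC2 \<mu> \<nu> \<tau>) \<Phi> = (Sc (-4 * \<mu>) \<circ> Mx \<circ> (opE \<mu> \<nu> \<tau>)) \<Phi>"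
proof -
  define c where "c = 1 / \<tau>"
  have tc: "\<tau> * c = 1" using assms(1) by (simp add: c_def)
  have tcX: "\<tau> * (c * X) = X" for X using tc by (simp add: mult.assoc[symmetric])
  have fb: "fwd \<tau> = Sc c \<circ> (Sh \<tau> \<ominus> id)" "bwd \<tau> = Sc c \<circ> (id \<ominus> Sh (-\<tau>))"
    by (simp_all add: fwd_def bwd_def c_def)
  show ?thesis
    by (simp add: fb opdefs calc[OF sm] fun_eq_iff; simp add: algebra_simps tc tcX)
qed


lemma zero_ops:
  shows "opH (\<lambda>x t. 0) = (\<lambda>x t. 0)" "opP (\<lambda>x t. 0) = (\<lambda>x t. 0)"
    "opK \<mu> \<nu> \<tau> (\<lambda>x t. 0) = (\<lambda>x t. 0)" "opD \<tau> (\<lambda>x t. 0) = (\<lambda>x t. 0)"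
    "opC1 \<mu> \<nu> \<tau> (\<lambda>x t. 0) = (\<lambda>x t. 0)" "opC2 \<mu> \<nu> \<tau> (\<lambda>x t. 0) = (\<lambda>x t. 0)"
    "opE \<mu> \<nu> \<tau> (\<lambda>x t. 0) = (\<lambda>x t. 0)"
  by (simp_all add: opdefs fwd_def bwd_def fun_eq_iff)

lemma comm_expand: "E (X \<Phi>) = (\<lambda>x t. comm E X \<Phi> x t + X (E \<Phi>) x t)"
  by (simp add: comm_def opsub_def fun_eq_iff)

theorem mainTheorem2:
  fixes \<mu> \<nu> \<tau> :: real and \<Phi> :: fn2
  assumes "\<tau> \<noteq> 0" and "smooth2 \<Phi>"
  defines "H \<equiv> opH" and "P \<equiv> opP" and "K \<equiv> opK \<mu> \<nu> \<tau>" and "D \<equiv> opD \<tau>"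
    and "C1 \<equiv> opC1 \<mu> \<nu> \<tau>" and "C2 \<equiv> opC2 \<mu> \<nu> \<tau>" and "E \<equiv> opE \<mu> \<nu> \<tau>"
  shows
    "comm K H \<Phi> = (Sc \<nu> \<circ> Sh (-\<tau>) \<circ> P) \<Phi> \<and>
     comm K P \<Phi> = (Sc \<mu> \<circ> fwd \<tau>) \<Phi> \<and>
     comm H P \<Phi> = opzero \<Phi> \<and>
     comm K D \<Phi> = opzero \<Phi> \<and>
     comm D H \<Phi> = bwd \<tau> \<Phi> \<and>
     comm D C1 \<Phi> = ((Sc (-1) \<circ> C1) \<oplus> (Sc (\<tau> * \<nu>) \<circ> D \<circ> D)) \<Phi> \<and>
     comm H C1 \<Phi> = (Sc (-2 * \<nu>) \<circ> D) \<Phi> \<and>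
     comm D P \<Phi> = P \<Phi> \<and>
     comm D C2 \<Phi> = (Sc (-1) \<circ> C2) \<Phi> \<and>
     comm P C2 \<Phi> = (Sc (2 * \<mu>) \<circ> D) \<Phi> \<and>
     comm K C1 \<Phi> = (Sc \<nu> \<circ> C2) \<Phi> \<and>
     comm K C2 \<Phi> = ((Sc \<mu> \<circ> C1) \<ominus> (Sc (\<tau> * \<mu> * \<nu>) \<circ> D \<circ> D)) \<Phi> \<and>
     comm H C2 \<Phi> = ((Sh (-\<tau>) \<circ> K) \<oplus> (K \<circ> Sh (-\<tau>))) \<Phi> \<and>
     comm P C1 \<Phi> = ((Sc (-2) \<circ> K) \<ominus> (Sc (\<tau> * \<nu>) \<circ> ((D \<circ> P) \<oplus> (P \<circ> D)))) \<Phi> \<and>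
     comm C1 C2 \<Phi> = (Sc (-\<tau> * \<nu>) \<circ> ((D \<circ> C2) \<oplus> (C2 \<circ> D))) \<Phi> \<and>
     comm E K \<Phi> = opzero \<Phi> \<and>
     comm E H \<Phi> = opzero \<Phi> \<and>
     comm E P \<Phi> = opzero \<Phi> \<and>
     comm E D \<Phi> = (Sc (-2) \<circ> E) \<Phi> \<and>
     comm E C1 \<Phi> = (Sc (4 * \<nu>) \<circ> (Mt \<oplus> Sc \<tau> \<oplus> (Sc \<tau> \<circ> Mx \<circ> Dx)) \<circ> E) \<Phi> \<and>
     comm E C2 \<Phi> = (Sc (-4 * \<mu>) \<circ> Mx \<circ> E) \<Phi> \<and>
     (E \<Phi> = opzero \<Phi> \<longrightarrow> (\<forall>X \<in> {H, P, K, D, C1, C2}. E (X \<Phi>) = opzero \<Phi>))"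
proof -
  have R: "comm K H \<Phi> = (Sc \<nu> \<circ> Sh (-\<tau>) \<circ> P) \<Phi> \<and>
     comm K P \<Phi> = (Sc \<mu> \<circ> fwd \<tau>) \<Phi> \<and>
     comm H P \<Phi> = opzero \<Phi> \<and>
     comm K D \<Phi> = opzero \<Phi> \<and>
     comm D H \<Phi> = bwd \<tau> \<Phi> \<and>
     comm D C1 \<Phi> = ((Sc (-1) \<circ> C1) \<oplus> (Sc (\<tau> * \<nu>) \<circ> D \<circ> D)) \<Phi> \<and>
     comm H C1 \<Phi> = (Sc (-2 * \<nu>) \<circ> D) \<Phi> \<and>
     comm D P \<Phi> = P \<Phi> \<and>
     comm D C2 \<Phi> = (Sc (-1) \<circ> C2) \<Phi> \<and>
     comm P C2 \<Phi> = (Sc (2 * \<mu>) \<circ> D) \<Phi> \<and>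
     comm K C1 \<Phi> = (Sc \<nu> \<circ> C2) \<Phi> \<and>
     comm K C2 \<Phi> = ((Sc \<mu> \<circ> C1) \<ominus> (Sc (\<tau> * \<mu> * \<nu>) \<circ> D \<circ> D)) \<Phi> \<and>
     comm H C2 \<Phi> = ((Sh (-\<tau>) \<circ> K) \<oplus> (K \<circ> Sh (-\<tau>))) \<Phi> \<and>
     comm P C1 \<Phi> = ((Sc (-2) \<circ> K) \<ominus> (Sc (\<tau> * \<nu>) \<circ> ((D \<circ> P) \<oplus> (P \<circ> D)))) \<Phi> \<and>
     comm C1 C2 \<Phi> = (Sc (-\<tau> * \<nu>) \<circ> ((D \<circ> C2) \<oplus> (C2 \<circ> D))) \<Phi> \<and>
     comm E K \<Phi> = opzero \<Phi> \<and>
     comm E H \<Phi> = opzero \<Phi> \<and>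
     comm E P \<Phi> = opzero \<Phi> \<and>
     comm E D \<Phi> = (Sc (-2) \<circ> E) \<Phi> \<and>
     comm E C1 \<Phi> = (Sc (4 * \<nu>) \<circ> (Mt \<oplus> Sc \<tau> \<oplus> (Sc \<tau> \<circ> Mx \<circ> Dx)) \<circ> E) \<Phi> \<and>
     comm E C2 \<Phi> = (Sc (-4 * \<mu>) \<circ> Mx \<circ> E) \<Phi>"
    unfolding H_def P_def K_def D_def C1_def C2_def E_def
    by (intro conjI rel_KH[OF assms(1,2)] rel_KP[OF assms(1,2)] rel_HP[OF assms(1,2)] rel_KD[OF assms(1,2)] rel_DH[OF assms(1,2)] rel_DC1[OF assms(1,2)] rel_HC1[OF assms(1,2)] rel_DP[OF assms(1,2)] rel_DC2[OF assms(1,2)] rel_PC2[OF assms(1,2)] rel_KC1[OF assms(1,2)] rel_KC2[OF assms(1,2)] rel_HC2[OF assms(1,2)] rel_PC1[OF assms(1,2)] rel_C1C2[OF assms(1,2)] rel_EK[OF assms(1,2)] rel_EH[OF assms(1,2)] rel_EP[OF assms(1,2)] rel_ED[OF assms(1,2)] rel_EC1[OF assms(1,2)] rel_EC2[OF assms(1,2)])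
  moreover have "E (X \<Phi>) = opzero \<Phi>" if EZ: "E \<Phi> = opzero \<Phi>" and X: "X \<in> {H, P, K, D, C1, C2}" for X
  proof -
    have EZ': "E \<Phi> = (\<lambda>x t. 0)" using EZ by (simp add: opzero_def)
    have Z: "X (\<lambda>x t. 0) = (\<lambda>x t. 0)"
      using X unfolding H_def P_def K_def D_def C1_def C2_def by (auto simp: zero_ops)
    have Ez: "E (\<lambda>x t. 0) = (\<lambda>x t. 0)" unfolding E_def by (simp add: zero_ops)
    have EZ'': "opE \<mu> \<nu> \<tau> \<Phi> = (\<lambda>x t. 0)" using EZ' by (simp add: E_def)
    from X consider "X = H" | "X = P" | "X = K" | "X = D" | "X = C1" | "X = C2" by blast
    then have C: "comm E X \<Phi> = (\<lambda>x t. 0)"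
    proof cases
      case 1 then show ?thesis using rel_EH[OF assms(1,2), of \<mu> \<nu>]
        by (simp add: H_def E_def opzero_def)
    next
      case 2 then show ?thesis using rel_EP[OF assms(1,2), of \<mu> \<nu>]
        by (simp add: P_def E_def opzero_def)
    next
      case 3 then show ?thesis using rel_EK[OF assms(1,2), of \<mu> \<nu>]
        by (simp add: K_def E_def opzero_def)
    next
      case 4 then show ?thesis using rel_ED[OF assms(1,2), of \<mu> \<nu>] EZ''
        by (simp add: D_def E_def o_def Sc_def)
    next
      case 5 then show ?thesis using rel_EC1[OF assms(1,2), of \<mu> \<nu>] EZ''
        by (simp add: C1_def E_def o_def Sc_def Mx_def Mt_def opadd_def Dx_def)
    next
      case 6 then show ?thesis using rel_EC2[OF assms(1,2), of \<mu> \<nu>] EZ''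
        by (simp add: C2_def E_def o_def Sc_def Mx_def)
    qed
    show ?thesis
      by (subst comm_expand[of E X \<Phi>]) (simp add: C EZ' Z opzero_def)
  qed
  ultimately show ?thesis by blast
qed

end
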